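(* For $n\ge 1$, let $S_n$ denote the bitsum (number of $1$s) of a persolus bitstring of length $n$ chosen uniformly at random among all persolus bitstrings of length $n$. Then \[ \lim_{n\to\infty}\frac{\mathbb{E}(S_n)}{n}=\frac{1}{3}\left[1-\left(\frac{31+3\sqrt{93}}{1922}\right)^{1/3}-\left(\frac{31-3\sqrt{93}}{1922}\right)^{1/3}\right]=0.1942540040\ldots, \] \[ \lim_{n\to\infty}\frac{\mathbb{V}(S_n)}{n}=\frac{1}{2883}\left(\frac{93}{2}\right)^{1/3}\left[\left(8649+457\sqrt{93}\right)^{1/3}+\left(8649-457\sqrt{93}\right)^{1/3}\right]=0.0495615175\ldots \]
   Context: A finite bitstring (a finite word over $\{0,1\}$) is called persolus if every $1$ in it is isolated (no two $1$s are adjacent) and each of its $0$s has at least one neighboring (adjacent) $0$. For every $n\ge1$ there is at least one persolus bitstring of length $n$. $\mathbb{E}$ and $\mathbb{V}$ denote expectation and variance with respect to the uniform distribution on persolus bitstrings of length $n$. *)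

theory Defs
  imports "HOL-Analysis.Analysis"
begin

text \<open>Bitstrings are lists of booleans; True represents the bit 1, False the bit 0.\<close>

definition persolus :: "bool list \<Rightarrow> bool" where
  "persolus w \<longleftrightarrow>
     (\<forall>i. Suc i < length w \<longrightarrow> \<not> (w ! i \<and> w ! Suc i)) \<and>
     (\<forall>i < length w. \<not> w ! i \<longrightarrow>
        ((i > 0 \<and> \<not> w ! (i - 1)) \<or> (Suc i < length w \<and> \<not> w ! Suc i)))"

definition persolus_strings :: "nat \<Rightarrow> bool list set" where
  "persolus_strings n = {w. length w = n \<and> persolus w}"

definition bitsum :: "bool list \<Rightarrow> nat" where
  "bitsum w = length (filter id w)"

definition ES :: "nat \<Rightarrow> real" where
  "ES n = (\<Sum>w\<in>persolus_strings n. real (bitsum w)) / real (card (persolus_strings n))"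

definition VS :: "nat \<Rightarrow> real" where
  "VS n = (\<Sum>w\<in>persolus_strings n. (real (bitsum w) - ES n)\<^sup>2) / real (card (persolus_strings n))"

end

theory Submission
  imports Defs "HOL-Real_Asymp.Real_Asymp"
begin


definition cnd :: "bool list \<Rightarrow> nat \<Rightarrow> bool" where
  "cnd w i \<longleftrightarrow> (Suc i < length w \<longrightarrow> \<not> (w ! i \<and> w ! Suc i)) \<and>
     (i < length w \<longrightarrow> \<not> w ! i \<longrightarrow>
        ((i > 0 \<and> \<not> w ! (i - 1)) \<or> (Suc i < length w \<and> \<not> w ! Suc i)))"

definition pf :: "nat \<Rightarrow> bool list \<Rightarrow> bool" where
  "pf k w \<longleftrightarrow> (\<forall>i. k \<le> i \<longrightarrow> cnd w i)"

lemma pers_pf: "persolus w = pf 0 w"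
  unfolding persolus_def pf_def cnd_def by auto

lemma all_ge_split: "(\<forall>i. k \<le> i \<longrightarrow> P i) \<longleftrightarrow> P k \<and> (\<forall>i. Suc k \<le> i \<longrightarrow> P i)"
  by (metis Suc_leD le_antisym not_less_eq_eq)

lemma pf_step: "pf k w = (cnd w k \<and> pf (Suc k) w)"
  unfolding pf_def by (rule all_ge_split)

lemma pf_end: "length w \<le> k \<Longrightarrow> pf k w"
  unfolding pf_def cnd_def by auto

lemma cnd_shift: "1 \<le> k \<Longrightarrow> cnd (x#w) (Suc k) = cnd w k"
  unfolding cnd_def by (cases k) auto

lemma pf_shift: "1 \<le> k \<Longrightarrow> pf (Suc k) (x#w) = pf k w"
proof -
  assume k: "1 \<le> k"
  have "pf (Suc k) (x#w) = (\<forall>i. k \<le> i \<longrightarrow> cnd (x#w) (Suc i))"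
    unfolding pf_def by (metis Suc_le_D Suc_le_mono)
  also have "\<dots> = pf k w" unfolding pf_def using k cnd_shift
    by (metis le_trans)
  finally show ?thesis .
qed


lemma pf_shift_app: "1 \<le> k \<Longrightarrow> pf (k + length u) (u @ w) = pf k w"
proof (induction u arbitrary: k)
  case Nil then show ?case by simp
next
  case (Cons a u)
  have "pf (k + length (a # u)) ((a # u) @ w) = pf (Suc (k + length u)) (a # (u @ w))" by simp
  also have "\<dots> = pf (k + length u) (u @ w)" using Cons.prems by (intro pf_shift) simp
  also have "\<dots> = pf k w" using Cons by simp
  finally show ?case .
qed

lemma all_less_Suc': "(\<forall>i<Suc n. P i) \<longleftrightarrow> P n \<and> (\<forall>i<n. P i)"
  using less_Suc_eq by auto

lemma pf_prefix: "pf 0 w \<longleftrightarrow> (\<forall>i<k. cnd w i) \<and> pf k w"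
  by (induction k) (auto simp: all_less_Suc' intro: pf_step[THEN iffD2] dest: pf_step[THEN iffD1])

lemma pre: "persolus (u @ False#False#v) \<longleftrightarrow> (\<forall>i<Suc (length u). cnd (u@False#False#v) i) \<and> persolus(False#False#v)"
proof -
  have "persolus (u @ False#False#v) = ((\<forall>i<Suc (length u). cnd (u@False#False#v) i) \<and> pf (1 + length u) (u@False#False#v))"
    unfolding pers_pf using pf_prefix by simp
  moreover have "persolus(False#False#v) = pf 1 (False#False#v)"
    unfolding pers_pf by (subst pf_step) (simp add: cnd_def)
  ultimately show ?thesis using pf_shift_app[of 1 u] by simp
qed

lemma P1: "persolus (False#False#False#w) = persolus (False#False#w)"
  using pre[of "[False]" w] by (simp add: all_less_Suc' cnd_def)

lemma P2: "persolus (False#False#True#False#False#w) = persolus (False#False#w)"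
  using pre[of "[False,False,True]" w] by (simp add: all_less_Suc' cnd_def numeral_eq_Suc)

lemma P5: "persolus (True#False#False#w) = persolus (False#False#w)"
  using pre[of "[True]" w] by (simp add: all_less_Suc' cnd_def)


lemma notp: "\<not> cnd w i \<Longrightarrow> \<not> persolus w"
  unfolding pers_pf pf_def by auto

lemma N1: "\<not> persolus (False#False#True#True#w)"
  by (rule notp[of _ 2]) (simp add: cnd_def numeral_eq_Suc)
lemma N2: "\<not> persolus (False#False#True#False#True#w)"
  by (rule notp[of _ 3]) (simp add: cnd_def numeral_eq_Suc)
lemma N3: "\<not> persolus [False,False,True,False]"
  by (rule notp[of _ 3]) (simp add: cnd_def numeral_eq_Suc)
lemma N4: "\<not> persolus (True#True#w)"
  by (rule notp[of _ 0]) (simp add: cnd_def numeral_eq_Suc)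
lemma N5: "\<not> persolus (False#True#w)"
  by (rule notp[of _ 0]) (simp add: cnd_def numeral_eq_Suc)
lemma N6: "\<not> persolus (True#False#True#w)"
  by (rule notp[of _ 1]) (simp add: cnd_def numeral_eq_Suc)


definition Qs :: "nat \<Rightarrow> bool list set" where
  "Qs n = {w. length w = n \<and> persolus (False#False#w)}"

lemma finite_len: "finite {w::bool list. length w = n}"
proof -
  have "{w::bool list. length w = n} = {w. set w \<subseteq> UNIV \<and> length w = n}" by simp
  then show ?thesis using finite_lists_length_eq[of "UNIV::bool set" n] by simp
qed

lemma finite_Qs: "finite (Qs n)"
  unfolding Qs_def by (rule finite_subset[OF _ finite_len[of n]]) auto

lemma finite_ps: "finite (persolus_strings n)"
  unfolding persolus_strings_def by (rule finite_subset[OF _ finite_len[of n]]) auto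

lemma Qs_rec: "Qs (n+3) = Cons False ` Qs (n+2) \<union> (\<lambda>v. True#False#False#v) ` Qs n"
proof (rule set_eqI, rule iffI)
  fix w assume "w \<in> Qs (n+3)"
  then have L: "length w = n+3" and P: "persolus (False#False#w)" unfolding Qs_def by auto
  then obtain x y z v where w: "w = x#y#z#v" and lv: "length v = n"
    by (metis One_nat_def Suc3_eq_add_3 add.commute length_Suc_conv)
  show "w \<in> Cons False ` Qs (n+2) \<union> (\<lambda>v. True#False#False#v) ` Qs n"
  proof (cases x)
    case False
    then have "y#z#v \<in> Qs (n+2)" using P w lv P1 unfolding Qs_def by auto
    then show ?thesis using w False by auto
  next
    case True
    have "y = False" using P w True N1 by (cases y) auto
    moreover have "z = False"
    proof (rule ccontr)
      assume "z \<noteq> False"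
      then show False using P w True N2 \<open>y = False\<close> by auto
    qed
    ultimately have "v \<in> Qs n" using P w True lv P2 unfolding Qs_def by auto
    then show ?thesis using w True \<open>y = False\<close> \<open>z = False\<close> by auto
  qed
next
  fix w assume "w \<in> Cons False ` Qs (n+2) \<union> (\<lambda>v. True#False#False#v) ` Qs n"
  then show "w \<in> Qs (n+3)" unfolding Qs_def using P1 P2 by auto
qed

lemma ps_rec: "persolus_strings (m+3) = (\<lambda>v. True#False#False#v) ` Qs m \<union> (\<lambda>v. False#False#v) ` Qs (m+1)"
proof (rule set_eqI, rule iffI)
  fix w assume "w \<in> persolus_strings (m+3)"
  then have L: "length w = m+3" and P: "persolus w" unfolding persolus_strings_def by auto
  then obtain x y z v where w: "w = x#y#z#v" and lv: "length v = m"
    by (metis One_nat_def Suc3_eq_add_3 add.commute length_Suc_conv)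
  show "w \<in> (\<lambda>v. True#False#False#v) ` Qs m \<union> (\<lambda>v. False#False#v) ` Qs (m+1)"
  proof (cases x)
    case False
    have "y = False" using P w False N5 by (cases y) auto
    then have "z#v \<in> Qs (m+1)" using P w lv False unfolding Qs_def by auto
    then show ?thesis using w False \<open>y = False\<close> by auto
  next
    case True
    have "y = False" using P w True N4 by (cases y) auto
    moreover have "z = False"
    proof (rule ccontr)
      assume "z \<noteq> False"
      then show False using P w True N6 \<open>y = False\<close> by auto
    qed
    ultimately have "v \<in> Qs m" using P w True lv P5 unfolding Qs_def by auto
    then show ?thesis using w True \<open>y = False\<close> \<open>z = False\<close> by auto
  qed
next
  fix w assume "w \<in> (\<lambda>v. True#False#False#v) ` Qs m \<union> (\<lambda>v. False#False#v) ` Qs (m+1)"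
  then show "w \<in> persolus_strings (m+3)" unfolding Qs_def persolus_strings_def using P5 by auto
qed

lemma sum_Qs_rec: "(\<Sum>w\<in>Qs (n+3). f w) = (\<Sum>w\<in>Qs (n+2). f (False#w)) + (\<Sum>w\<in>Qs n. f (True#False#False#w))"
proof -
  have d: "Cons False ` Qs (n+2) \<inter> (\<lambda>v. True#False#False#v) ` Qs n = {}" by auto
  have "(\<Sum>w\<in>Qs (n+3). f w) = (\<Sum>w\<in>Cons False ` Qs (n+2). f w) + (\<Sum>w\<in>(\<lambda>v. True#False#False#v) ` Qs n. f w)"
    unfolding Qs_rec by (rule sum.union_disjoint) (auto simp: finite_Qs)
  also have "\<dots> = (\<Sum>w\<in>Qs (n+2). f (False#w)) + (\<Sum>w\<in>Qs n. f (True#False#False#w))"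
    by (subst sum.reindex, simp add: inj_on_def, subst sum.reindex, simp add: inj_on_def, simp)
  finally show ?thesis .
qed

lemma sum_ps_rec: "(\<Sum>w\<in>persolus_strings (m+3). f w) = (\<Sum>w\<in>Qs m. f (True#False#False#w)) + (\<Sum>w\<in>Qs (m+1). f (False#False#w))"
proof -
  have "(\<Sum>w\<in>persolus_strings (m+3). f w) = (\<Sum>w\<in>(\<lambda>v. True#False#False#v) ` Qs m. f w) + (\<Sum>w\<in>(\<lambda>v. False#False#v) ` Qs (m+1). f w)"
    unfolding ps_rec by (rule sum.union_disjoint) (auto simp: finite_Qs)
  also have "\<dots> = (\<Sum>w\<in>Qs m. f (True#False#False#w)) + (\<Sum>w\<in>Qs (m+1). f (False#False#w))"
    by (subst sum.reindex, simp add: inj_on_def, subst sum.reindex, simp add: inj_on_def, simp)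
  finally show ?thesis .
qed

definition S :: "nat \<Rightarrow> nat \<Rightarrow> real" where
  "S j n = (\<Sum>w\<in>Qs n. real (bitsum w) ^ j)"

lemma bitsum_F: "bitsum (False#w) = bitsum w" by (simp add: bitsum_def)
lemma bitsum_TFF: "bitsum (True#False#False#w) = bitsum w + 1" by (simp add: bitsum_def)

lemma S0_rec: "S 0 (n+3) = S 0 (n+2) + S 0 n"
  unfolding S_def by (subst sum_Qs_rec) simp

lemma S1_rec: "S 1 (n+3) = S 1 (n+2) + S 1 n + S 0 n"
  unfolding S_def by (subst sum_Qs_rec) (simp add: bitsum_F bitsum_TFF sum.distrib)

lemma S2_rec: "S 2 (n+3) = S 2 (n+2) + S 2 n + 2 * S 1 n + S 0 n"
  unfolding S_def by (subst sum_Qs_rec) (simp add: bitsum_F bitsum_TFF sum.distrib power2_eq_square algebra_simps sum_distrib_left)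

lemma rep_Qs: "replicate n False \<in> Qs n"
proof -
  have "persolus (replicate (n+2) False)"
  proof (induction n)
    case 0 then show ?case unfolding persolus_def by (auto simp: nth_Cons split: nat.splits)
  next
    case (Suc n) then show ?case using P1[of "replicate n False"] by (simp add: numeral_eq_Suc)
  qed
  then show ?thesis unfolding Qs_def by (simp add: numeral_eq_Suc)
qed

lemma S0_ge1: "S 0 n \<ge> 1"
proof -
  have "S 0 n = real (card (Qs n))" unfolding S_def by simp
  moreover have "card (Qs n) \<ge> 1" using rep_Qs finite_Qs
    by (metis One_nat_def Suc_leI card_gt_0_iff empty_iff)
  ultimately show ?thesis by simp
qed



lemma contr:
  fixes u :: "nat \<Rightarrow> real"
  assumes c: "0 \<le> c" "c < 1" and r: "\<And>n. u (Suc n) \<le> c * u n + M"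
  shows "u n \<le> max (u 0) (M / (1 - c))"
proof (induction n)
  case 0 then show ?case by simp
next
  case (Suc n)
  let ?B = "max (u 0) (M / (1 - c))"
  have "M \<le> (1 - c) * ?B"
  proof -
    have "M = (1 - c) * (M / (1 - c))" using c by simp
    also have "\<dots> \<le> (1 - c) * ?B" using c by (intro mult_left_mono) auto
    finally show ?thesis .
  qed
  moreover have "c * u n \<le> c * ?B" using Suc c by (intro mult_left_mono) auto
  ultimately show ?case using r[of n] by (simp add: algebra_simps)
qed

lemma stab:
  fixes x :: "nat \<Rightarrow> real"
  assumes q: "0 < q" "q < 1" and pq: "p^2 < 4*q"
    and y: "\<And>n. \<bar>x (n+2) + p * x (n+1) + q * x n\<bar> \<le> M"
  shows "\<exists>B. \<forall>n. \<bar>x n\<bar> \<le> B"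
proof -
  define a where "a = -p/2"
  define b where "b = sqrt (4*q - p^2) / 2"
  have b2: "b^2 = q - a^2" unfolding a_def b_def using pq
    by (simp add: power_divide power2_eq_square field_simps)
  define z where "z = Complex a b"
  have nz: "cmod z = sqrt q" unfolding z_def cmod_def using b2 by simp
  have nzc: "cmod (cnj z) = sqrt q" using nz by simp
  define w where "w n = complex_of_real (x (n+1)) - z * complex_of_real (x n)" for n
  have wrec: "w (Suc n) = cnj z * w n + complex_of_real (x (n+2) + p * x (n+1) + q * x n)" for n
    unfolding w_def z_def using b2
    by (simp add: complex_eq_iff a_def algebra_simps power2_eq_square)
  have sq: "0 \<le> sqrt q" "sqrt q < 1" using q by auto
  have "cmod (w (Suc n)) \<le> sqrt q * cmod (w n) + M" for n
  proof -
    have "cmod (w (Suc n)) \<le> cmod (cnj z * w n) + cmod (complex_of_real (x (n+2) + p * x (n+1) + q * x n))"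
      unfolding wrec by (rule norm_triangle_ineq)
    also have "\<dots> = sqrt q * cmod (w n) + \<bar>x (n+2) + p * x (n+1) + q * x n\<bar>"
      by (simp only: norm_mult nzc norm_of_real)
    also have "\<dots> \<le> sqrt q * cmod (w n) + M" using y[of n] by simp
    finally show ?thesis .
  qed
  then have wb: "cmod (w n) \<le> max (cmod (w 0)) (M / (1 - sqrt q))" for n
    using contr[OF sq, of "\<lambda>n. cmod (w n)"] by blast
  define Bw where "Bw = max (cmod (w 0)) (M / (1 - sqrt q))"
  have "\<bar>x (Suc n)\<bar> \<le> sqrt q * \<bar>x n\<bar> + Bw" for n
  proof -
    have "complex_of_real (x (Suc n)) = w n + z * complex_of_real (x n)" unfolding w_def by simp
    then have "\<bar>x (Suc n)\<bar> = cmod (w n + z * complex_of_real (x n))"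
      by (metis norm_of_real)
    also have "\<dots> \<le> cmod (w n) + cmod (z * complex_of_real (x n))" by (rule norm_triangle_ineq)
    also have "\<dots> \<le> Bw + sqrt q * \<bar>x n\<bar>" using wb[of n] unfolding Bw_def by (simp add: norm_mult nz)
    finally show ?thesis by simp
  qed
  then have "\<bar>x n\<bar> \<le> max \<bar>x 0\<bar> (Bw / (1 - sqrt q))" for n
    using contr[OF sq, of "\<lambda>n. \<bar>x n\<bar>"] by blast
  then show ?thesis by blast
qed


lemma lemL:
  fixes x :: "nat \<Rightarrow> real"
  assumes al: "\<alpha>^3 = \<alpha>^2 + 1" "1.4 < \<alpha>" "\<alpha> < 1.5"
    and y: "\<And>n. \<bar>x (n+3) - x (n+2) - x n\<bar> \<le> M"
  shows "\<exists>K B. \<forall>n. \<bar>x n - K * \<alpha>^n\<bar> \<le> B"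
proof -
  define p where "p = \<alpha> - 1"
  define q where "q = \<alpha>^2 - \<alpha>"
  have a1: "\<alpha> > 1" using al by simp
  have qe: "q = \<alpha> * (\<alpha> - 1)" unfolding q_def by (simp add: power2_eq_square algebra_simps)
  have m1: "\<alpha> * (\<alpha> - 1) \<le> 1.5 * (\<alpha> - 1)" using al by (intro mult_right_mono) auto
  have m2: "\<alpha> * (\<alpha> - 1) \<ge> 1.4 * (\<alpha> - 1)" using al by (intro mult_right_mono) auto
  have m3: "(\<alpha> - 1) * (\<alpha> - 1) \<le> 0.5 * (\<alpha> - 1)" using al by (intro mult_right_mono) auto
  have q0: "0 < q" "q < 1" unfolding qe using m1 m2 al by auto
  have pq: "p^2 < 4*q" unfolding p_def qe power2_eq_square using m2 m3 al by auto
  have qa: "q * \<alpha> = 1" unfolding q_def using al(1) by (simp add: power2_eq_square power3_eq_cube algebra_simps)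
  define s where "s n = x (n+2) + p * x (n+1) + q * x n" for n
  define yy where "yy n = x (n+3) - x (n+2) - x n" for n
  have srec: "s (Suc n) = \<alpha> * s n + yy n" for n
  proof -
    have "s (Suc n) - \<alpha> * s n - yy n = -(\<alpha>^3 - \<alpha>^2 - 1) * x n"
      unfolding s_def yy_def p_def q_def by (simp add: algebra_simps power2_eq_square power3_eq_cube numeral_eq_Suc)
    then show ?thesis using al(1) by simp
  qed
  define r where "r = 1 / \<alpha>"
  have r: "0 < r" "r < 1" unfolding r_def using a1 by auto
  define t where "t j = yy j / \<alpha>^(j+1)" for j
  have tb: "norm (t j) \<le> M * r^(j+1)" for j
  proof -
    have "norm (t j) = \<bar>yy j\<bar> / \<alpha>^(j+1)" unfolding t_def using a1 by simp
    also have "\<dots> \<le> M / \<alpha>^(j+1)" using y[of j] a1 unfolding yy_def by (intro divide_right_mono) auto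
    also have "\<dots> = M * r^(j+1)" unfolding r_def by (simp add: power_one_over)
    finally show ?thesis .
  qed
  have sg: "summable (\<lambda>j. M * r^(j+1))" using r by (intro summable_mult summable_ignore_initial_segment summable_geometric) auto
  have st: "summable t" by (rule summable_comparison_test[OF _ sg]) (use tb in auto)
  define K' where "K' = s 0 + suminf t"
  have sform: "s n = \<alpha>^n * (s 0 + (\<Sum>j<n. t j))" for n
  proof (induction n)
    case 0 then show ?case by simp
  next
    case (Suc n)
    have "s (Suc n) = \<alpha> * (\<alpha>^n * (s 0 + (\<Sum>j<n. t j))) + yy n" using srec Suc by simp
    also have "\<dots> = \<alpha>^(Suc n) * (s 0 + (\<Sum>j<Suc n. t j))"
      unfolding t_def using a1 by (simp add: algebra_simps)
    finally show ?case .
  qed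
  have sdev: "\<bar>s n - K' * \<alpha>^n\<bar> \<le> M / (\<alpha> - 1)" for n
  proof -
    have e: "(\<Sum>j. t (j + n)) = suminf t - (\<Sum>j<n. t j)" using suminf_minus_initial_segment[OF st] .
    have "s n - K' * \<alpha>^n = -(\<alpha>^n * (\<Sum>j. t (j + n)))" unfolding sform[of n] K'_def e by (simp add: algebra_simps)
    then have "\<bar>s n - K' * \<alpha>^n\<bar> = \<alpha>^n * norm (\<Sum>j. t (j + n))" using a1 by (simp add: abs_mult)
    also have "\<dots> \<le> \<alpha>^n * (\<Sum>j. M * r^(j+n+1))"
    proof (intro mult_left_mono)
      have s2: "summable (\<lambda>j. M * r^(j+n+1))" using summable_ignore_initial_segment[OF sg, of n] by (simp add: add.assoc)
      have "norm (\<Sum>j. t (j + n)) \<le> (\<Sum>j. norm (t (j + n)))"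
        by (rule summable_norm) (rule summable_comparison_test[OF _ s2], use tb in \<open>auto simp: add.assoc\<close>)
      also have "\<dots> \<le> (\<Sum>j. M * r^(j+n+1))"
        by (rule suminf_le) (use tb s2 in \<open>auto simp: add.assoc intro: summable_comparison_test[OF _ s2]\<close>)
      finally show "norm (\<Sum>j. t (j + n)) \<le> (\<Sum>j. M * r^(j+n+1))" .
    qed (use a1 in auto)
    also have "(\<Sum>j. M * r^(j+n+1)) = M * r^(n+1) * (\<Sum>j. r^j)"
      by (subst suminf_mult[symmetric]) (use r in \<open>auto simp: power_add algebra_simps\<close>)
    also have "\<dots> = M * r^(n+1) / (1 - r)" using suminf_geometric[of r] r by simp
    also have "\<alpha>^n * (M * r^(n+1) / (1 - r)) = M / (\<alpha> - 1)"
      unfolding r_def using a1 by (simp add: field_simps power_one_over)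
    finally show ?thesis .
  qed
  define K where "K = K' / (3*\<alpha>^2 - 2*\<alpha>)"
  have Kn: "3*\<alpha>^2 - 2*\<alpha> > 0"
  proof -
    have "3*\<alpha>^2 - 2*\<alpha> = \<alpha> * (3*\<alpha> - 2)" by (simp add: power2_eq_square algebra_simps)
    then show ?thesis using a1 by simp
  qed
  define z where "z n = x n - K * \<alpha>^n" for n
  have "\<bar>z (n+2) + p * z (n+1) + q * z n\<bar> \<le> M / (\<alpha> - 1)" for n
  proof -
    have "z (n+2) + p * z (n+1) + q * z n = s n - K * \<alpha>^n * (\<alpha>^2 + p * \<alpha> + q)"
      unfolding z_def s_def by (simp add: algebra_simps power_add power2_eq_square)
    also have "\<dots> = s n - K' * \<alpha>^n"
    proof -
      have e1: "\<alpha>^2 + p * \<alpha> + q = 3*\<alpha>^2 - 2*\<alpha>" unfolding p_def q_def by (simp add: power2_eq_square algebra_simps)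
      have e2: "K * (3*\<alpha>^2 - 2*\<alpha>) = K'" unfolding K_def using Kn by simp
      have "K * \<alpha>^n * (\<alpha>^2 + p * \<alpha> + q) = (K * (3*\<alpha>^2 - 2*\<alpha>)) * \<alpha>^n"
        by (simp only: e1) (simp only: ac_simps)
      then have "K * \<alpha>^n * (\<alpha>^2 + p * \<alpha> + q) = K' * \<alpha>^n" by (simp only: e2)
      then show ?thesis by simp
    qed
    finally show ?thesis using sdev by simp
  qed
  then obtain B where "\<forall>n. \<bar>z n\<bar> \<le> B" using stab[OF q0 pq] by blast
  then show ?thesis unfolding z_def by blast
qed



lemma cubicA: "(\<alpha>::real)^3 = \<alpha>^2 + 1 \<Longrightarrow> 31*\<alpha>^6 - 3*\<alpha>^2*(\<alpha>^2+3)^2 - (\<alpha>^2+3)^3 = 0"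
  by algebra

lemma cubicB: "(\<alpha>::real)^3 = \<alpha>^2 + 1 \<Longrightarrow> 29791*(2*\<alpha>^2+\<alpha>+1)^3 - 53*(2*\<alpha>^2+\<alpha>+1)*(\<alpha>^2+3)^6 - (\<alpha>^2+3)^9 = 0"
  by algebra


lemma cube_unique:
  fixes x t a b c :: real
  assumes "a*x^3 - b*x - c = 0" "a*t^3 - b*t - c = 0" "a > 0" "3/4 * a * t^2 > b"
  shows "x = t"
proof (rule ccontr)
  assume ne: "x \<noteq> t"
  have "(x - t) * (a*(x^2 + x*t + t^2) - b) = 0"
    using assms(1,2) by (simp add: algebra_simps power2_eq_square power3_eq_cube)
  then have "a*(x^2 + x*t + t^2) = b" using ne by simp
  moreover have "x^2 + x*t + t^2 \<ge> 3/4 * t^2"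
  proof -
    have "x^2 + x*t + t^2 = (x + t/2)^2 + 3/4 * t^2" by (simp add: power2_eq_square algebra_simps)
    then show ?thesis by simp
  qed
  ultimately have "b \<ge> a * (3/4 * t^2)" using assms(3) by (metis mult_left_mono less_imp_le)
  then show False using assms(4) by simp
qed

lemma s93: "9 < sqrt 93" "sqrt 93 < 9.7"
proof -
  show "9 < sqrt 93" by (rule real_less_rsqrt) simp
  show "sqrt 93 < 9.7" by (rule real_less_lsqrt) (simp_all add: power2_eq_square)
qed

lemma mu_closed:
  fixes \<alpha> :: real
  assumes al: "\<alpha>^3 = \<alpha>^2 + 1"
  shows "1/(\<alpha>^2+3) = (1/3) * (1 - root 3 ((31 + 3 * sqrt 93) / 1922) - root 3 ((31 - 3 * sqrt 93) / 1922))"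
proof -
  define r1 where "r1 = root 3 ((31 + 3 * sqrt 93) / 1922)"
  define r2 where "r2 = root 3 ((31 - 3 * sqrt 93) / 1922)"
  have c1: "r1^3 = (31 + 3 * sqrt 93) / 1922" unfolding r1_def by (simp add: odd_real_root_pow)
  have c2: "r2^3 = (31 - 3 * sqrt 93) / 1922" unfolding r2_def by (simp add: odd_real_root_pow)
  have "r1 * r2 = root 3 (((31 + 3 * sqrt 93) / 1922) * ((31 - 3 * sqrt 93) / 1922))"
    unfolding r1_def r2_def by (rule real_root_mult[symmetric])
  also have "((31 + 3 * sqrt 93) / 1922) * ((31 - 3 * sqrt 93) / 1922) = 1/29791"
    by (simp add: algebra_simps power2_eq_square[symmetric])
  also have "root 3 (1/29791) = 1/31" by (rule real_root_pos_unique) (auto simp: power_divide)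
  finally have p: "r1 * r2 = 1/31" .
  define t where "t = r1 + r2"
  have "t^3 = r1^3 + r2^3 + 3 * (r1*r2) * t" unfolding t_def by (simp add: algebra_simps power3_eq_cube)
  moreover have "r1^3 + r2^3 = 1/31" unfolding c1 c2 by (simp add: field_simps)
  ultimately have tc: "31 * t^3 - 3 * t - 1 = 0" using p by simp
  have "r1 > 0.31"
  proof -
    have "0.31 = root 3 (0.31^3)" by (rule real_root_power_cancel[symmetric]) auto
    also have "\<dots> < r1" unfolding r1_def using s93 by (subst real_root_less_iff) (auto simp: power_divide)
    finally show ?thesis .
  qed
  moreover have "r2 > 0.06"
  proof -
    have "0.06 = root 3 (0.06^3)" by (rule real_root_power_cancel[symmetric]) auto
    also have "\<dots> < r2" unfolding r2_def using s93 by (subst real_root_less_iff) (auto simp: power_divide)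
    finally show ?thesis .
  qed
  ultimately have tb: "t > 0.37" unfolding t_def by simp
  define x where "x = \<alpha>^2 / (\<alpha>^2 + 3)"
  have D: "\<alpha>^2 + 3 > 0" by (simp add: add_nonneg_pos)
  have xd: "x * (\<alpha>^2+3) = \<alpha>^2" unfolding x_def using D by simp
  have "(31 * x^3 - 3 * x - 1) * (\<alpha>^2+3)^3 = 31*\<alpha>^6 - 3*\<alpha>^2*(\<alpha>^2+3)^2 - (\<alpha>^2+3)^3"
    using xd by algebra
  also have "\<dots> = 0" using cubicA[OF al] by simp
  finally have "(31 * x^3 - 3 * x - 1) * (\<alpha>^2+3)^3 = 0" .
  then have xc: "31 * x^3 - 3 * x - 1 = 0" using D by simp
  have "3/4 * 31 * t^2 > 3"
  proof -
    have "t^2 > 0.37^2" using tb by (intro power_strict_mono) auto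
    then show ?thesis by (simp add: power_divide)
  qed
  then have "x = t" using cube_unique[OF xc tc] by simp
  then show ?thesis unfolding t_def r1_def r2_def x_def using D by (simp add: field_simps)
qed


lemma sigma_closed:
  fixes \<alpha> :: real
  assumes al: "\<alpha>^3 = \<alpha>^2 + 1"
  shows "(2*\<alpha>^2+\<alpha>+1)/(\<alpha>^2+3)^3 = (1/2883) * root 3 (93/2) * (root 3 (8649 + 457 * sqrt 93) + root 3 (8649 - 457 * sqrt 93))"
proof -
  define r1 where "r1 = root 3 (93/2 * (8649 + 457 * sqrt 93))"
  define r2 where "r2 = root 3 (93/2 * (8649 - 457 * sqrt 93))"
  have e: "root 3 (93/2) * (root 3 (8649 + 457 * sqrt 93) + root 3 (8649 - 457 * sqrt 93)) = r1 + r2"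
    unfolding r1_def r2_def real_root_mult by (rule distrib_left)
  have c1: "r1^3 = 93/2 * (8649 + 457 * sqrt 93)" unfolding r1_def by (simp add: odd_real_root_pow)
  have c2: "r2^3 = 93/2 * (8649 - 457 * sqrt 93)" unfolding r2_def by (simp add: odd_real_root_pow)
  have "r1 * r2 = root 3 ((93/2 * (8649 + 457 * sqrt 93)) * (93/2 * (8649 - 457 * sqrt 93)))"
    unfolding r1_def r2_def by (rule real_root_mult[symmetric])
  also have "(93/2 * (8649 + 457 * sqrt 93)) * (93/2 * (8649 - 457 * sqrt 93)) = 119750257089"
    by (simp add: algebra_simps power2_eq_square[symmetric] power_mult_distrib power_divide)
  also have "root 3 119750257089 = 4929" by (rule real_root_pos_unique) auto
  finally have p: "r1 * r2 = 4929" .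
  define W where "W = r1 + r2"
  have "W^3 = r1^3 + r2^3 + 3 * (r1*r2) * W" unfolding W_def by (simp add: algebra_simps power3_eq_cube)
  moreover have "r1^3 + r2^3 = 804357" unfolding c1 c2 by (simp add: field_simps)
  ultimately have Wc: "W^3 = 804357 + 14787 * W" using p by simp
  define v where "v = W / 2883"
  have vc: "29791 * v^3 - 53 * v - 1 = 0"
  proof -
    have "(29791 * v^3 - 53 * v - 1) * 2883^3 = 29791 * W^3 - 53 * 2883^2 * W - 2883^3"
      unfolding v_def by (simp add: field_simps power3_eq_cube power2_eq_square)
    also have "\<dots> = 0" unfolding Wc by simp
    finally show ?thesis by simp
  qed
  have "r1 > 84"
  proof -
    have "84 = root 3 (84^3)" by (rule real_root_power_cancel[symmetric]) auto
    also have "\<dots> < r1" unfolding r1_def using s93 by (subst real_root_less_iff) auto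
    finally show ?thesis .
  qed
  moreover have "r2 > 58"
  proof -
    have "58 = root 3 (58^3)" by (rule real_root_power_cancel[symmetric]) auto
    also have "\<dots> < r2" unfolding r2_def using s93 by (subst real_root_less_iff) auto
    finally show ?thesis .
  qed
  ultimately have vb: "v > 142/2883" unfolding v_def W_def by (simp add: divide_strict_right_mono)
  have "3/4 * 29791 * v^2 > 53"
  proof -
    have "v^2 > (142/2883)^2" using vb by (intro power_strict_mono) auto
    then show ?thesis by (simp add: power_divide)
  qed
  define x where "x = (2*\<alpha>^2+\<alpha>+1)/(\<alpha>^2+3)^3"
  have D: "\<alpha>^2 + 3 > 0" by (simp add: add_nonneg_pos)
  have xd: "x * (\<alpha>^2+3)^3 = 2*\<alpha>^2+\<alpha>+1" unfolding x_def using D by simp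
  have "(29791 * x^3 - 53 * x - 1) * ((\<alpha>^2+3)^3)^3 = 29791*(2*\<alpha>^2+\<alpha>+1)^3 - 53*(2*\<alpha>^2+\<alpha>+1)*(\<alpha>^2+3)^6 - (\<alpha>^2+3)^9"
    using xd by algebra
  also have "\<dots> = 0" using cubicB[OF al] by simp
  finally have xc: "29791 * x^3 - 53 * x - 1 = 0" using D by simp
  have "x = v" using cube_unique[OF xc vc] \<open>3/4 * 29791 * v^2 > 53\<close> by simp
  then show ?thesis unfolding x_def v_def W_def using e by simp
qed



lemma alpha_ex: "\<exists>\<alpha>::real. \<alpha>^3 = \<alpha>^2 + 1 \<and> 1.4 < \<alpha> \<and> \<alpha> < 1.5"
proof -
  have "\<exists>x::real. 1.4 \<le> x \<and> x \<le> 1.5 \<and> x^3 - x^2 - 1 = 0"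
    by (rule IVT[of "\<lambda>x::real. x^3 - x^2 - 1"]) (auto intro!: continuous_intros simp: power2_eq_square power3_eq_cube)
  then obtain x :: real where x: "1.4 \<le> x" "x \<le> 1.5" "x^3 - x^2 - 1 = 0" by blast
  have "x \<noteq> 1.4"
  proof
    assume h: "x = 1.4"
    have "(1.4::real)^3 - 1.4^2 - 1 = 0" using x(3) unfolding h .
    then show False by (simp add: power_divide)
  qed
  moreover have "x \<noteq> 1.5"
  proof
    assume h: "x = 1.5"
    have "(1.5::real)^3 - 1.5^2 - 1 = 0" using x(3) unfolding h .
    then show False by (simp add: power_divide)
  qed
  ultimately show ?thesis using x by (intro exI[of _ x]) auto
qed

lemma var_formula:
  fixes f :: "'a \<Rightarrow> real"
  assumes "finite X" "card X > 0"
  shows "(\<Sum>x\<in>X. (f x - (\<Sum>y\<in>X. f y) / card X)^2) / card X = (\<Sum>x\<in>X. (f x)^2) / card X - ((\<Sum>y\<in>X. f y) / card X)^2"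
proof -
  define E where "E = (\<Sum>y\<in>X. f y) / card X"
  define N where "N = real (card X)"
  have N: "N > 0" unfolding N_def using assms by simp
  have "(\<Sum>x\<in>X. (f x - E)^2) = (\<Sum>x\<in>X. (f x)^2 - 2 * E * f x + E^2)"
    by (rule sum.cong) (auto simp: power2_eq_square algebra_simps)
  also have "\<dots> = (\<Sum>x\<in>X. (f x)^2) - 2 * E * (\<Sum>x\<in>X. f x) + N * E^2"
    unfolding N_def by (simp add: sum.distrib sum_subtractf sum_distrib_left)
  also have "(\<Sum>x\<in>X. f x) = E * N" unfolding E_def N_def using assms by simp
  finally have "(\<Sum>x\<in>X. (f x - E)^2) = (\<Sum>x\<in>X. (f x)^2) - N * E^2" by (simp add: power2_eq_square algebra_simps)
  then have "(\<Sum>x\<in>X. (f x - E)^2) / N = (\<Sum>x\<in>X. (f x)^2) / N - N * E^2 / N" by (simp add: diff_divide_distrib)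
  also have "N * E^2 / N = E^2" using N by simp
  finally show ?thesis unfolding E_def N_def .
qed

lemma card_ps: "real (card (persolus_strings (m+3))) = S 0 m + S 0 (m+1)"
  unfolding real_of_card S_def by (subst sum_ps_rec) simp

lemma sum1_ps: "(\<Sum>w\<in>persolus_strings (m+3). real (bitsum w)) = S 1 m + S 0 m + S 1 (m+1)"
  unfolding S_def by (subst sum_ps_rec) (simp add: bitsum_F bitsum_TFF sum.distrib)

lemma sum2_ps: "(\<Sum>w\<in>persolus_strings (m+3). (real (bitsum w))^2) = S 2 m + 2 * S 1 m + S 0 m + S 2 (m+1)"
  unfolding S_def by (subst sum_ps_rec) (simp add: bitsum_F bitsum_TFF sum.distrib power2_eq_square algebra_simps sum_distrib_left)

lemma ES_S: "ES (m+3) = (S 1 m + S 0 m + S 1 (m+1)) / (S 0 m + S 0 (m+1))"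
  unfolding ES_def sum1_ps card_ps ..

lemma VS_S: "VS (m+3) = (S 2 m + 2 * S 1 m + S 0 m + S 2 (m+1)) / (S 0 m + S 0 (m+1)) - (ES (m+3))^2"
proof -
  have c: "card (persolus_strings (m+3)) > 0"
  proof -
    have "real (card (persolus_strings (m+3))) > 0" unfolding card_ps using S0_ge1[of m] S0_ge1[of "m+1"] by simp
    then show ?thesis by simp
  qed
  show ?thesis
    unfolding VS_def ES_def
    using var_formula[OF finite_ps c, of "\<lambda>w. real (bitsum w)"] unfolding sum2_ps card_ps by simp
qed

lemma decay:
  fixes E :: "nat \<Rightarrow> real"
  assumes a: "\<alpha> > 1" and b: "\<And>m. \<bar>E m\<bar> \<le> B"
  shows "(\<lambda>m. E m / \<alpha>^m) \<longlonglongrightarrow> 0" "(\<lambda>m. real m * (E m / \<alpha>^m)) \<longlonglongrightarrow> 0"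
proof -
  have l1: "(\<lambda>m. real m / \<alpha>^m) \<longlonglongrightarrow> 0" using lim_n_over_pown[of \<alpha>] a by simp
  have l2: "(\<lambda>m. inverse (\<alpha>^m)) \<longlonglongrightarrow> 0" using LIMSEQ_inverse_realpow_zero[OF a] .
  show "(\<lambda>m. E m / \<alpha>^m) \<longlonglongrightarrow> 0"
  proof (rule Lim_null_comparison)
    show "\<forall>\<^sub>F m in sequentially. norm (E m / \<alpha>^m) \<le> B * inverse (\<alpha>^m)"
      using b a by (intro always_eventually allI) (simp add: divide_right_mono field_simps)
    show "(\<lambda>m. B * inverse (\<alpha>^m)) \<longlonglongrightarrow> 0" using tendsto_mult_right_zero[OF l2] by simp
  qed
  show "(\<lambda>m. real m * (E m / \<alpha>^m)) \<longlonglongrightarrow> 0"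
  proof (rule Lim_null_comparison)
    show "\<forall>\<^sub>F m in sequentially. norm (real m * (E m / \<alpha>^m)) \<le> B * (real m / \<alpha>^m)"
    proof (intro always_eventually allI)
      fix m
      have "norm (real m * (E m / \<alpha>^m)) = real m * \<bar>E m\<bar> / \<alpha>^m" using a by (simp add: abs_mult)
      also have "\<dots> \<le> real m * B / \<alpha>^m" using b[of m] a by (intro divide_right_mono mult_left_mono) auto
      also have "\<dots> = B * (real m / \<alpha>^m)" by simp
      finally show "norm (real m * (E m / \<alpha>^m)) \<le> B * (real m / \<alpha>^m)" .
    qed
    show "(\<lambda>m. B * (real m / \<alpha>^m)) \<longlonglongrightarrow> 0" using tendsto_mult_right_zero[OF l1] by simp
  qed
qed


lemma var_num:
  fixes c n b m C2 C1 C0 A B1 B0 u1 u2 u3 :: real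
  assumes "c = C2*m^2 + C1*m + C0 + u3" "n = A + u1" "b = B1*m + B0 + u2" "C2*A = B1^2" "m + 3 > 0"
  shows "(c*n - b^2)/(m+3) = (C1*A - 2*B1*B0)*(m/(m+3)) + (C0*A - B0^2)*(1/(m+3)) + C2*(m*u1)*(m/(m+3))
      + C1*u1*(m/(m+3)) + C0*u1*(1/(m+3)) + u3*(A+u1)*(1/(m+3)) - 2*B1*u2*(m/(m+3)) - 2*B0*u2*(1/(m+3)) - u2^2*(1/(m+3))"
proof -
  have "c*n - b^2 = (C1*A - 2*B1*B0)*m + (C0*A - B0^2) + C2*(m*u1)*m
      + C1*u1*m + C0*u1 + u3*(A+u1) - 2*B1*u2*m - 2*B0*u2 - u2^2 + (C2*A - B1^2)*m^2"
    unfolding assms(1-3) by (simp add: algebra_simps power2_eq_square)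
  then have e: "c*n - b^2 = (C1*A - 2*B1*B0)*m + (C0*A - B0^2) + C2*(m*u1)*m
      + C1*u1*m + C0*u1 + u3*(A+u1) - 2*B1*u2*m - 2*B0*u2 - u2^2" using assms(4) by simp
  show ?thesis unfolding e by (simp only: add_divide_distrib diff_divide_distrib times_divide_eq_right mult_1_right)
qed

lemma lim_aux: "(\<lambda>m::nat. real m / (real m + 3)) \<longlonglongrightarrow> 1" "(\<lambda>m::nat. 1 / (real m + 3)) \<longlonglongrightarrow> 0"
  by real_asymp+


lemma abs_comb: "\<bar>a\<bar> \<le> p \<Longrightarrow> \<bar>b\<bar> \<le> q \<Longrightarrow> \<bar>2*a + b\<bar> \<le> 2*p + (q::real)"
  by arith

lemma abs2: "\<bar>a\<bar> \<le> p \<Longrightarrow> \<bar>b\<bar> \<le> q \<Longrightarrow> \<bar>a + b\<bar> \<le> p + (q::real)"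
  by arith
lemma abs3: "\<bar>a\<bar> \<le> p \<Longrightarrow> \<bar>b\<bar> \<le> q \<Longrightarrow> \<bar>c\<bar> \<le> r \<Longrightarrow> \<bar>a + b + c\<bar> \<le> p + q + (r::real)"
  by arith
lemma abs4: "\<bar>a\<bar> \<le> p \<Longrightarrow> \<bar>b\<bar> \<le> q \<Longrightarrow> \<bar>c\<bar> \<le> r \<Longrightarrow> \<bar>d\<bar> \<le> s \<Longrightarrow> \<bar>a + 2*b + c + d\<bar> \<le> p + 2*q + r + (s::real)"
  by arith

lemma div_cancel: "a \<noteq> 0 \<Longrightarrow> (x/a)/(y/a) = x/(y::real)" by simp
lemma var_div: "n \<noteq> 0 \<Longrightarrow> c/n - (b/n)^2 = (c*n - b^2)/(n^2::real)" by (simp add: field_simps power2_eq_square)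
lemma div_swap: "v = q / n \<Longrightarrow> v / real (m+3) = (q / (real m + 3)) / (n::real)" by simp

lemma main_asym:
  fixes \<alpha> :: real
  assumes al: "\<alpha>^3 = \<alpha>^2 + 1" "1.4 < \<alpha>" "\<alpha> < 1.5"
  shows "(\<lambda>n. ES n / real n) \<longlonglongrightarrow> 1/(\<alpha>^2+3)"
    and "(\<lambda>n. VS n / real n) \<longlonglongrightarrow> (2*\<alpha>^2+\<alpha>+1)/(\<alpha>^2+3)^3"
proof -
  have a1: "\<alpha> > 1" using al by simp
  obtain A Ba where ea: "\<And>n. \<bar>S 0 n - A * \<alpha>^n\<bar> \<le> Ba"
    using lemL[OF al, of "S 0" 0] S0_rec by auto
  have Apos: "A > 0"
  proof (rule ccontr)
    assume "\<not> A > 0"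
    then have neg: "A * \<alpha>^n \<le> 0" for n using a1 by (simp add: mult_nonpos_nonneg)
    have bd: "S 0 n \<le> Ba" for n using ea[of n] neg[of n] unfolding abs_le_iff by linarith
    have grow: "S 0 (3*k) \<ge> real k" for k
    proof (induction k)
      case 0 then show ?case using S0_ge1[of 0] by simp
    next
      case (Suc k)
      have "S 0 (3 * Suc k) = S 0 (3*k+2) + S 0 (3*k)" using S0_rec[of "3*k"] by (simp add: add.commute)
      then show ?case using Suc S0_ge1[of "3*k+2"] by simp
    qed
    obtain k :: nat where "real k > Ba" using reals_Archimedean2 by blast
    then show False using grow[of k] bd[of "3*k"] by simp
  qed
  define D where "D = \<alpha>^2 + 3"
  have Dpos: "D > 0" unfolding D_def by (simp add: add_nonneg_pos)
  have clin: "(n+3)*\<alpha>^3 - (n+2)*\<alpha>^2 - n = D" for n :: real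
    using al(1) unfolding D_def by algebra
  have cquad: "(n+3)^2*\<alpha>^3 - (n+2)^2*\<alpha>^2 - n^2 = 2*D*n + 5*\<alpha>^2 + 9" for n :: real
    using al(1) unfolding D_def by algebra
  define B1 where "B1 = A / D"
  have B1D: "B1 * D = A" unfolding B1_def using Dpos by simp
  define x1 where "x1 n = S 1 n - B1 * real n * \<alpha>^n" for n
  have f1: "x1 (n+3) - x1 (n+2) - x1 n = S 0 n - A * \<alpha>^n" for n
  proof -
    have "x1 (n+3) - x1 (n+2) - x1 n = S 0 n - B1 * \<alpha>^n * ((real n+3)*\<alpha>^3 - (real n+2)*\<alpha>^2 - real n)"
      unfolding x1_def S1_rec[of n] by (simp add: power_add algebra_simps power2_eq_square power3_eq_cube)
    also have "\<dots> = S 0 n - A * \<alpha>^n" unfolding clin using B1D by (simp add: algebra_simps)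
    finally show ?thesis .
  qed
  obtain B0 Bb where eb: "\<And>n. \<bar>x1 n - B0 * \<alpha>^n\<bar> \<le> Bb"
    using lemL[OF al, of x1 Ba] f1 ea by auto
  define C2 where "C2 = B1 / D"
  define C1 where "C1 = (2*B0 + A - C2*(5*\<alpha>^2+9)) / D"
  have C2D: "C2 * D = B1" unfolding C2_def using Dpos by simp
  have C1D: "C1 * D = 2*B0 + A - C2*(5*\<alpha>^2+9)" unfolding C1_def using Dpos by simp
  define x2 where "x2 n = S 2 n - \<alpha>^n * (C2 * (real n)^2 + C1 * real n)" for n
  have f2: "x2 (n+3) - x2 (n+2) - x2 n = 2 * (x1 n - B0 * \<alpha>^n) + (S 0 n - A * \<alpha>^n)" for n
  proof -
    have "x2 (n+3) - x2 (n+2) - x2 n = 2 * S 1 n + S 0 n - \<alpha>^n * (C2 * ((real n+3)^2*\<alpha>^3 - (real n+2)^2*\<alpha>^2 - (real n)^2)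
        + C1 * ((real n+3)*\<alpha>^3 - (real n+2)*\<alpha>^2 - real n))"
      unfolding x2_def S2_rec[of n] by (simp add: power_add algebra_simps power2_eq_square power3_eq_cube)
    also have "\<dots> = 2 * S 1 n + S 0 n - \<alpha>^n * (C2 * (2*D*real n + 5*\<alpha>^2 + 9) + C1 * D)"
      unfolding clin cquad ..
    also have "C2 * (2*D*real n + 5*\<alpha>^2 + 9) + C1 * D = 2 * real n * (C2 * D) + (C1 * D + C2*(5*\<alpha>^2+9))"
      by (simp add: algebra_simps)
    also have "\<dots> = 2 * B1 * real n + 2 * B0 + A" unfolding C2D C1D by simp
    finally show ?thesis unfolding x1_def by (simp add: algebra_simps)
  qed
  obtain C0 Bc where ec: "\<And>n. \<bar>x2 n - C0 * \<alpha>^n\<bar> \<le> Bc"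
  proof -
    have "\<bar>x2 (n+3) - x2 (n+2) - x2 n\<bar> \<le> 2 * Bb + Ba" for n
      unfolding f2 by (rule abs_comb[OF eb ea])
    then show ?thesis using lemL[OF al, of x2 "2*Bb+Ba"] that by auto
  qed
  define ea' where "ea' n = S 0 n - A * \<alpha>^n" for n
  define eb' where "eb' n = x1 n - B0 * \<alpha>^n" for n
  define ec' where "ec' n = x2 n - C0 * \<alpha>^n" for n
  have S0e: "S 0 n = A * \<alpha>^n + ea' n" for n unfolding ea'_def by simp
  have S1e: "S 1 n = \<alpha>^n * (B1 * real n + B0) + eb' n" for n unfolding eb'_def x1_def by (simp add: algebra_simps)
  have S2e: "S 2 n = \<alpha>^n * (C2 * (real n)^2 + C1 * real n + C0) + ec' n" for n unfolding ec'_def x2_def by (simp add: algebra_simps)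
  have an: "\<alpha>^n > 0" for n using a1 by simp
  have anz: "\<alpha>^n \<noteq> 0" for n using a1 by simp
  define E1 where "E1 m = ea' m + ea' (m+1)" for m
  define E2 where "E2 m = eb' m + ea' m + eb' (m+1)" for m
  define E3 where "E3 m = ec' m + 2 * eb' m + ea' m + ec' (m+1)" for m
  have ba: "\<bar>ea' n\<bar> \<le> Ba" for n unfolding ea'_def by (rule ea)
  have bb: "\<bar>eb' n\<bar> \<le> Bb" for n unfolding eb'_def by (rule eb)
  have bc: "\<bar>ec' n\<bar> \<le> Bc" for n unfolding ec'_def by (rule ec)
  have bE1: "\<bar>E1 m\<bar> \<le> 2 * Ba" for m unfolding E1_def using abs2[OF ba[of m] ba[of "m+1"]] by simp
  have bE2: "\<bar>E2 m\<bar> \<le> 2 * Bb + Ba" for m unfolding E2_def using abs3[OF bb[of m] ba[of m] bb[of "m+1"]] by simp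
  have bE3: "\<bar>E3 m\<bar> \<le> 2 * Bc + 2 * Bb + Ba" for m unfolding E3_def using abs4[OF bc[of m] bb[of m] ba[of m] bc[of "m+1"]] by (simp add: add.assoc)
  define A' where "A' = A * (1 + \<alpha>)"
  define B1' where "B1' = B1 * (1 + \<alpha>)"
  define B0' where "B0' = B0 + A + \<alpha> * (B1 + B0)"
  define C2' where "C2' = C2 * (1 + \<alpha>)"
  define C1' where "C1' = C1 * (1 + \<alpha>) + 2 * B1 + 2 * \<alpha> * C2"
  define C0' where "C0' = C0 + 2 * B0 + A + \<alpha> * (C2 + C1 + C0)"
  define nt where "nt m = (S 0 m + S 0 (m+1)) / \<alpha>^m" for m
  define bt where "bt m = (S 1 m + S 0 m + S 1 (m+1)) / \<alpha>^m" for m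
  define ct where "ct m = (S 2 m + 2 * S 1 m + S 0 m + S 2 (m+1)) / \<alpha>^m" for m
  have ntf: "nt m = A' + E1 m / \<alpha>^m" for m
    unfolding nt_def A'_def E1_def S0e using anz[of m] by (simp add: field_simps)
  have btf: "bt m = B1' * real m + B0' + E2 m / \<alpha>^m" for m
    unfolding bt_def B1'_def B0'_def E2_def S0e S1e using anz[of m] by (simp add: field_simps)
  have ctf: "ct m = C2' * (real m)^2 + C1' * real m + C0' + E3 m / \<alpha>^m" for m
    unfolding ct_def C2'_def C1'_def C0'_def E3_def S0e S1e S2e using anz[of m]
    by (simp add: field_simps power2_eq_square)
  have Apos': "A' > 0" unfolding A'_def using Apos a1 by simp
  have ntpos: "nt m > 0" for m unfolding nt_def using S0_ge1[of m] S0_ge1[of "m+1"] an[of m] by simp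
  have U1: "(\<lambda>m. E1 m / \<alpha>^m) \<longlonglongrightarrow> 0" "(\<lambda>m. real m * (E1 m / \<alpha>^m)) \<longlonglongrightarrow> 0" using decay[OF a1 bE1] by auto
  have U2: "(\<lambda>m. E2 m / \<alpha>^m) \<longlonglongrightarrow> 0" using decay[OF a1 bE2] by auto
  have U3: "(\<lambda>m. E3 m / \<alpha>^m) \<longlonglongrightarrow> 0" using decay[OF a1 bE3] by auto
  note L = lim_aux
  have ESe: "ES (m+3) / real (m+3) = (B1' * (real m / (real m + 3)) + (B0' + E2 m / \<alpha>^m) * (1 / (real m + 3))) / (A' + E1 m / \<alpha>^m)" for m
  proof -
    have "ES (m+3) = bt m / nt m" unfolding ES_S bt_def nt_def using a1 by simp
    also have "\<dots> = (B1' * real m + B0' + E2 m / \<alpha>^m) / (A' + E1 m / \<alpha>^m)" unfolding btf ntf ..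
    finally have "ES (m+3) / real (m+3) = ((B1' * real m + B0' + E2 m / \<alpha>^m) / (real m + 3)) / (A' + E1 m / \<alpha>^m)"
      by simp
    also have "(B1' * real m + B0' + E2 m / \<alpha>^m) / (real m + 3) = B1' * (real m / (real m + 3)) + (B0' + E2 m / \<alpha>^m) * (1 / (real m + 3))"
      by (simp add: add_divide_distrib)
    finally show ?thesis .
  qed
  have "(\<lambda>m. ES (m+3) / real (m+3)) \<longlonglongrightarrow> (B1' * 1 + (B0' + 0) * 0) / (A' + 0)"
    unfolding ESe by (intro tendsto_intros L U1 U2) (use Apos' in simp)
  moreover have "(B1' * 1 + (B0' + 0) * 0) / (A' + 0) = 1/(\<alpha>^2+3)"
  proof -
    have "(B1' * 1 + (B0' + 0) * 0) / (A' + 0) = B1 / A" unfolding B1'_def A'_def using a1 by simp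
    also have "\<dots> = 1 / D" unfolding B1_def using Apos Dpos by simp
    finally show ?thesis unfolding D_def .
  qed
  ultimately have lim3: "(\<lambda>m. ES (m+3) / real (m+3)) \<longlonglongrightarrow> 1/(\<alpha>^2+3)" by simp
  show "(\<lambda>n. ES n / real n) \<longlonglongrightarrow> 1/(\<alpha>^2+3)"
    by (rule LIMSEQ_offset[where f="\<lambda>n. ES n / real n" and k=3]) (rule lim3)
  have C2A: "C2' * A' = B1'^2"
  proof -
    have "C2 * A = C2 * (B1 * D)" using B1D by simp
    also have "\<dots> = (C2 * D) * B1" by (simp only: ac_simps)
    also have "\<dots> = B1^2" unfolding C2D by (simp add: power2_eq_square)
    finally have "C2 * A = B1^2" .
    have "C2' * A' = (C2 * A) * (1+\<alpha>)^2" unfolding C2'_def A'_def by (simp add: algebra_simps power2_eq_square)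
    also have "\<dots> = B1'^2" unfolding \<open>C2 * A = B1^2\<close> B1'_def by (simp add: power_mult_distrib)
    finally show ?thesis .
  qed
  define X where "X = C1' * A' - 2 * B1' * B0'"
  define Y where "Y = C0' * A' - B0'^2"
  have VSe: "VS (m+3) / real (m+3) = (X*(real m/(real m+3)) + Y*(1/(real m+3)) + C2'*(real m*(E1 m / \<alpha>^m))*(real m/(real m+3))
      + C1'*(E1 m / \<alpha>^m)*(real m/(real m+3)) + C0'*(E1 m / \<alpha>^m)*(1/(real m+3)) + (E3 m / \<alpha>^m)*(A'+(E1 m / \<alpha>^m))*(1/(real m+3))
      - 2*B1'*(E2 m / \<alpha>^m)*(real m/(real m+3)) - 2*B0'*(E2 m / \<alpha>^m)*(1/(real m+3)) - (E2 m / \<alpha>^m)^2*(1/(real m+3)))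
      / (A' + E1 m / \<alpha>^m)^2" for m
  proof -
    have "VS (m+3) = ct m / nt m - (bt m / nt m)^2" unfolding VS_S ES_S ct_def nt_def bt_def by (simp only: div_cancel[OF anz])
    also have "\<dots> = (ct m * nt m - (bt m)^2) / (nt m)^2" using ntpos[of m] by (intro var_div) simp
    finally have "VS (m+3) / real (m+3) = ((ct m * nt m - (bt m)^2) / (real m + 3)) / (nt m)^2" by (simp only: div_swap)
    also have "(ct m * nt m - (bt m)^2) / (real m + 3) = X*(real m/(real m+3)) + Y*(1/(real m+3)) + C2'*(real m*(E1 m / \<alpha>^m))*(real m/(real m+3))
      + C1'*(E1 m / \<alpha>^m)*(real m/(real m+3)) + C0'*(E1 m / \<alpha>^m)*(1/(real m+3)) + (E3 m / \<alpha>^m)*(A'+(E1 m / \<alpha>^m))*(1/(real m+3))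
      - 2*B1'*(E2 m / \<alpha>^m)*(real m/(real m+3)) - 2*B0'*(E2 m / \<alpha>^m)*(1/(real m+3)) - (E2 m / \<alpha>^m)^2*(1/(real m+3))"
      unfolding X_def Y_def by (rule var_num[OF ctf ntf btf C2A]) simp
    finally show ?thesis unfolding ntf .
  qed
  have "(\<lambda>m. VS (m+3) / real (m+3)) \<longlonglongrightarrow> (X*1 + Y*0 + C2'*0*1 + C1'*0*1 + C0'*0*0 + 0*(A'+0)*0 - 2*B1'*0*1 - 2*B0'*0*0 - 0^2*0) / (A'+0)^2"
    unfolding VSe by (intro tendsto_intros L U1 U2 U3) (use Apos' in simp)
  moreover have "(X*1 + Y*0 + C2'*0*1 + C1'*0*1 + C0'*0*0 + 0*(A'+0)*0 - 2*B1'*0*1 - 2*B0'*0*0 - 0^2*0) / (A'+0)^2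
     = (2*\<alpha>^2+\<alpha>+1)/(\<alpha>^2+3)^3"
  proof -
    have C2A0: "C2 * A = B1^2"
    proof -
      have "C2 * A = C2 * (B1 * D)" using B1D by simp
      also have "\<dots> = (C2 * D) * B1" by (simp only: ac_simps)
      also have "\<dots> = B1^2" unfolding C2D by (simp add: power2_eq_square)
      finally show ?thesis .
    qed
    have "X = (1+\<alpha>)^2 * (A*C1 - 2*B1*B0) + 2*\<alpha>*(1+\<alpha>)*(C2*A - B1^2)"
      unfolding X_def C1'_def A'_def B1'_def B0'_def by (simp add: algebra_simps power2_eq_square)
    then have X1: "X = (1+\<alpha>)^2 * (A*C1 - 2*B1*B0)" unfolding C2A0 by simp
    have X2: "A*C1 - 2*B1*B0 = A*(A - C2*(5*\<alpha>^2+9))/D" unfolding C1_def B1_def using Dpos by (simp add: field_simps)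
    have X3: "C2 = A/D^2" unfolding C2_def B1_def by (simp add: power2_eq_square)
    have "X / A'^2 = (A*(A - A/D^2*(5*\<alpha>^2+9))/D) / A^2" unfolding X1 X2 X3 A'_def using a1
      by (simp add: power_mult_distrib)
    also have "\<dots> = 1/D - (5*\<alpha>^2+9)/D^3" using Apos Dpos by (simp add: field_simps power2_eq_square power3_eq_cube)
    also have "\<dots> = (2*\<alpha>^2+\<alpha>+1)/(\<alpha>^2+3)^3"
    proof -
      have h: "D^2 - (5*\<alpha>^2+9) = 2*\<alpha>^2+\<alpha>+1" unfolding D_def using al(1) by algebra
      have "1/D - (5*\<alpha>^2+9)/D^3 = (D^2 - (5*\<alpha>^2+9))/D^3" using Dpos by (simp add: field_simps power2_eq_square power3_eq_cube)
      also have "\<dots> = (2*\<alpha>^2+\<alpha>+1)/D^3" unfolding h ..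
      finally show ?thesis unfolding D_def .
    qed
    finally show ?thesis by simp
  qed
  ultimately have lim4: "(\<lambda>m. VS (m+3) / real (m+3)) \<longlonglongrightarrow> (2*\<alpha>^2+\<alpha>+1)/(\<alpha>^2+3)^3" by simp
  show "(\<lambda>n. VS n / real n) \<longlonglongrightarrow> (2*\<alpha>^2+\<alpha>+1)/(\<alpha>^2+3)^3"
    by (rule LIMSEQ_offset[where f="\<lambda>n. VS n / real n" and k=3]) (rule lim4)
qed


theorem mainTheorem2:
  shows "((\<lambda>n. ES n / real n) \<longlonglongrightarrow>
           (1/3) * (1 - root 3 ((31 + 3 * sqrt 93) / 1922) - root 3 ((31 - 3 * sqrt 93) / 1922)))
     \<and> ((\<lambda>n. VS n / real n) \<longlonglongrightarrow>
           (1/2883) * root 3 (93/2) * (root 3 (8649 + 457 * sqrt 93) + root 3 (8649 - 457 * sqrt 93)))"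
proof -
  obtain \<alpha> :: real where al: "\<alpha>^3 = \<alpha>^2 + 1" "1.4 < \<alpha>" "\<alpha> < 1.5" using alpha_ex by blast
  have l1: "(\<lambda>n. ES n / real n) \<longlonglongrightarrow> (1/3) * (1 - root 3 ((31 + 3 * sqrt 93) / 1922) - root 3 ((31 - 3 * sqrt 93) / 1922))"
    using main_asym(1)[OF al] unfolding mu_closed[OF al(1)] .
  have l2: "(\<lambda>n. VS n / real n) \<longlonglongrightarrow> (1/2883) * root 3 (93/2) * (root 3 (8649 + 457 * sqrt 93) + root 3 (8649 - 457 * sqrt 93))"
    using main_asym(2)[OF al] unfolding sigma_closed[OF al(1)] .
  show ?thesis using l1 l2 by blast
qed

end
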